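(* Let $\mathcal{A}=(a_{ijk})\in\mathbb{R}^{n\times n\times n}$ be a piezoelectric-type tensor. Define the fourth-order tensor $\mathcal{B}=(b_{i_1i_2i_3i_4})\in\mathbb{R}^{n\times n\times n\times n}$ by $b_{i_1i_2i_3i_4}=\sum_{i=1}^n a_{ii_1i_2}a_{ii_3i_4}$ for all $i_1,i_2,i_3,i_4\in\{1,\dots,n\}$, and the tensor $\bar{\mathcal{B}}=(\bar b_{i_1i_2i_3i_4})$ by $$\bar b_{i_1i_2i_3i_4}=\tfrac13\big(b_{i_1i_2i_3i_4}+b_{i_1i_3i_2i_4}+b_{i_1i_4i_2i_3}\big).$$ Then $\bar{\mathcal{B}}$ is positive semi-definite, i.e. $$\bar{\mathcal{B}}\mathbf{x}^4=\sum_{i_1,i_2,i_3,i_4=1}^n \bar b_{i_1i_2i_3i_4}x_{i_1}x_{i_2}x_{i_3}x_{i_4}\ge 0\quad\text{for all }\mathbf{x}\in\mathbb{R}^n.$$ Consequently, all $Z$-eigenvalues of $\bar{\mathcal{B}}$ are nonnegative.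
   Context: A third-order tensor $\mathcal{A}=(a_{ijk})\in\mathbb{R}^{n\times n\times n}$ is called piezoelectric-type if $a_{ijk}=a_{ikj}$ for all $i,j,k\in\{1,\dots,n\}$. For a fourth-order tensor $\mathcal{T}=(t_{i_1i_2i_3i_4})$ and $\mathbf{x}\in\mathbb{R}^n$, $\mathcal{T}\mathbf{x}^3\in\mathbb{R}^n$ is the vector with $i$-th entry $\sum_{i_2,i_3,i_4}t_{ii_2i_3i_4}x_{i_2}x_{i_3}x_{i_4}$. A real number $\lambda$ is a $Z$-eigenvalue of $\mathcal{T}$ if there is $\mathbf{x}\in\mathbb{R}^n$ with $\mathcal{T}\mathbf{x}^3=\lambda\mathbf{x}$ and $\mathbf{x}^T\mathbf{x}=1$. *)

theory Defs
  imports "HOL-Analysis.Analysis"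
begin

type_synonym 'n tensor3 = "'n \<Rightarrow> 'n \<Rightarrow> 'n \<Rightarrow> real"
type_synonym 'n tensor4 = "'n \<Rightarrow> 'n \<Rightarrow> 'n \<Rightarrow> 'n \<Rightarrow> real"

definition piezo_type :: "('n::finite) tensor3 \<Rightarrow> bool" where
  "piezo_type A \<longleftrightarrow> (\<forall>i j k. A i j k = A i k j)"

definition tensorB :: "('n::finite) tensor3 \<Rightarrow> 'n tensor4" where
  "tensorB A = (\<lambda>i1 i2 i3 i4. \<Sum>i\<in>UNIV. A i i1 i2 * A i i3 i4)"

definition tensorBbar :: "('n::finite) tensor3 \<Rightarrow> 'n tensor4" where
  "tensorBbar A = (let b = tensorB A in
     (\<lambda>i1 i2 i3 i4. (b i1 i2 i3 i4 + b i1 i3 i2 i4 + b i1 i4 i2 i3) / 3))"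

definition tensor4_form :: "('n::finite) tensor4 \<Rightarrow> real ^ 'n \<Rightarrow> real" where
  "tensor4_form T x = (\<Sum>i1\<in>UNIV. \<Sum>i2\<in>UNIV. \<Sum>i3\<in>UNIV. \<Sum>i4\<in>UNIV.
      T i1 i2 i3 i4 * x$i1 * x$i2 * x$i3 * x$i4)"

definition tensor4_apply3 :: "('n::finite) tensor4 \<Rightarrow> real ^ 'n \<Rightarrow> real ^ 'n" where
  "tensor4_apply3 T x = (\<chi> i. \<Sum>i2\<in>UNIV. \<Sum>i3\<in>UNIV. \<Sum>i4\<in>UNIV.
      T i i2 i3 i4 * x$i2 * x$i3 * x$i4)"

definition Z_eigenvalue :: "('n::finite) tensor4 \<Rightarrow> real \<Rightarrow> bool" where
  "Z_eigenvalue T lam \<longleftrightarrow> (\<exists>x::real^'n. tensor4_apply3 T x = lam *\<^sub>R x \<and> x \<bullet> x = 1)"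

end

theory Submission
  imports Defs
begin

lemma swap5:
  fixes f :: "'n \<Rightarrow> 'n \<Rightarrow> 'n \<Rightarrow> 'n \<Rightarrow> 'n \<Rightarrow> real"
  shows "(\<Sum>i\<in>UNIV. \<Sum>a\<in>UNIV. \<Sum>b\<in>UNIV. \<Sum>c\<in>UNIV. \<Sum>d\<in>UNIV. f i a b c d)
   = (\<Sum>a\<in>UNIV. \<Sum>b\<in>UNIV. \<Sum>c\<in>UNIV. \<Sum>d\<in>UNIV. \<Sum>i\<in>UNIV. f i a b c d)"
proof -
  have "(\<Sum>i\<in>UNIV. \<Sum>a\<in>UNIV. \<Sum>b\<in>UNIV. \<Sum>c\<in>UNIV. \<Sum>d\<in>UNIV. f i a b c d)
   = (\<Sum>a\<in>UNIV. \<Sum>i\<in>UNIV. \<Sum>b\<in>UNIV. \<Sum>c\<in>UNIV. \<Sum>d\<in>UNIV. f i a b c d)"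
    by (rule sum.swap)
  also have "... = (\<Sum>a\<in>UNIV. \<Sum>b\<in>UNIV. \<Sum>i\<in>UNIV. \<Sum>c\<in>UNIV. \<Sum>d\<in>UNIV. f i a b c d)"
    by (rule sum.cong[OF refl], rule sum.swap)
  also have "... = (\<Sum>a\<in>UNIV. \<Sum>b\<in>UNIV. \<Sum>c\<in>UNIV. \<Sum>i\<in>UNIV. \<Sum>d\<in>UNIV. f i a b c d)"
    by (rule sum.cong[OF refl], rule sum.cong[OF refl], rule sum.swap)
  also have "... = (\<Sum>a\<in>UNIV. \<Sum>b\<in>UNIV. \<Sum>c\<in>UNIV. \<Sum>d\<in>UNIV. \<Sum>i\<in>UNIV. f i a b c d)"
    by (rule sum.cong[OF refl], rule sum.cong[OF refl], rule sum.cong[OF refl], rule sum.swap)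
  finally show ?thesis .
qed

lemma formB:
  "tensor4_form (tensorB A) x = (\<Sum>i\<in>UNIV. (\<Sum>j\<in>UNIV. \<Sum>k\<in>UNIV. A i j k * x$j * x$k)^2)"
proof -
  have "(\<Sum>i\<in>UNIV. (\<Sum>j\<in>UNIV. \<Sum>k\<in>UNIV. A i j k * x$j * x$k)^2)
     = (\<Sum>i\<in>UNIV. \<Sum>i1\<in>UNIV. \<Sum>i2\<in>UNIV. \<Sum>i3\<in>UNIV. \<Sum>i4\<in>UNIV.
           A i i1 i2 * A i i3 i4 * x$i1 * x$i2 * x$i3 * x$i4)"
    apply (rule sum.cong, rule refl)
    unfolding power2_eq_square sum_distrib_right
    apply (rule sum.cong, rule refl)+
    unfolding sum_distrib_left
    apply (rule sum.cong, rule refl)+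
    by (simp add: mult_ac)
  also have "... = (\<Sum>i1\<in>UNIV. \<Sum>i2\<in>UNIV. \<Sum>i3\<in>UNIV. \<Sum>i4\<in>UNIV. \<Sum>i\<in>UNIV.
           A i i1 i2 * A i i3 i4 * x$i1 * x$i2 * x$i3 * x$i4)"
    by (rule swap5)
  also have "... = tensor4_form (tensorB A) x"
    by (simp add: tensor4_form_def tensorB_def sum_distrib_right)
  finally show ?thesis by simp
qed

lemma form_perm1:
  "tensor4_form (\<lambda>i1 i2 i3 i4. T i1 i3 i2 i4) x = tensor4_form T x"
proof -
  have "tensor4_form (\<lambda>i1 i2 i3 i4. T i1 i3 i2 i4) x
     = (\<Sum>i1\<in>UNIV. \<Sum>i3\<in>UNIV. \<Sum>i2\<in>UNIV. \<Sum>i4\<in>UNIV.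
      T i1 i3 i2 i4 * x$i1 * x$i2 * x$i3 * x$i4)"
    unfolding tensor4_form_def
    apply (rule sum.cong, rule refl)
    by (rule sum.swap)
  also have "... = tensor4_form T x"
    unfolding tensor4_form_def
    by (simp add: mult_ac)
  finally show ?thesis .
qed

lemma form_perm2:
  "tensor4_form (\<lambda>i1 i2 i3 i4. T i1 i4 i2 i3) x = tensor4_form T x"
proof -
  have "tensor4_form (\<lambda>i1 i2 i3 i4. T i1 i4 i2 i3) x
     = (\<Sum>i1\<in>UNIV. \<Sum>i2\<in>UNIV. \<Sum>i4\<in>UNIV. \<Sum>i3\<in>UNIV.
      T i1 i4 i2 i3 * x$i1 * x$i2 * x$i3 * x$i4)"
    unfolding tensor4_form_def
    apply (rule sum.cong, rule refl)
    apply (rule sum.cong, rule refl)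
    by (rule sum.swap)
  also have "... = (\<Sum>i1\<in>UNIV. \<Sum>i4\<in>UNIV. \<Sum>i2\<in>UNIV. \<Sum>i3\<in>UNIV.
      T i1 i4 i2 i3 * x$i1 * x$i2 * x$i3 * x$i4)"
    apply (rule sum.cong, rule refl)
    by (rule sum.swap)
  also have "... = tensor4_form T x"
    unfolding tensor4_form_def
    by (simp add: mult_ac)
  finally show ?thesis .
qed

lemma form_add:
  "tensor4_form (\<lambda>i1 i2 i3 i4. (T i1 i2 i3 i4 + S i1 i2 i3 i4 + R i1 i2 i3 i4) / 3) x
   = (tensor4_form T x + tensor4_form S x + tensor4_form R x) / 3"
  unfolding tensor4_form_def
  by (simp add: sum.distrib sum_divide_distrib[symmetric] algebra_simps add_divide_distrib)

lemma form_nonneg: "tensor4_form (tensorBbar A) x \<ge> 0"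
proof -
  have "tensor4_form (tensorBbar A) x = tensor4_form (tensorB A) x"
  proof -
    have e: "tensorBbar A = (\<lambda>i1 i2 i3 i4. ((tensorB A) i1 i2 i3 i4 + (\<lambda>i1 i2 i3 i4. (tensorB A) i1 i3 i2 i4) i1 i2 i3 i4
       + (\<lambda>i1 i2 i3 i4. (tensorB A) i1 i4 i2 i3) i1 i2 i3 i4) / 3)"
      unfolding tensorBbar_def Let_def by (rule refl)
    have 1: "tensor4_form (tensorBbar A) x = (tensor4_form (tensorB A) x + tensor4_form (\<lambda>i1 i2 i3 i4. (tensorB A) i1 i3 i2 i4) x
        + tensor4_form (\<lambda>i1 i2 i3 i4. (tensorB A) i1 i4 i2 i3) x) / 3"
      unfolding e by (rule form_add)
    have 2: "tensor4_form (\<lambda>i1 i2 i3 i4. (tensorB A) i1 i3 i2 i4) x = tensor4_form (tensorB A) x" by (rule form_perm1)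
    have 3: "tensor4_form (\<lambda>i1 i2 i3 i4. (tensorB A) i1 i4 i2 i3) x = tensor4_form (tensorB A) x" by (rule form_perm2)
    show ?thesis using 1 unfolding 2 3 by simp
  qed
  also have "... \<ge> 0" unfolding formB by (simp add: sum_nonneg)
  finally show ?thesis by simp
qed

lemma form_apply: "x \<bullet> tensor4_apply3 T x = tensor4_form T x"
  unfolding tensor4_apply3_def tensor4_form_def inner_vec_def
  by (simp add: sum_distrib_left mult_ac)

theorem theorem1p1:
  fixes A :: "('n::finite) tensor3"
  assumes "piezo_type A"
  shows "(\<forall>x::real^'n. tensor4_form (tensorBbar A) x \<ge> 0) \<and>
         (\<forall>lam. Z_eigenvalue (tensorBbar A) lam \<longrightarrow> lam \<ge> 0)"
proof (intro conjI allI impI)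
  fix x :: "real^'n" show "tensor4_form (tensorBbar A) x \<ge> 0" by (rule form_nonneg)
next
  fix lam assume "Z_eigenvalue (tensorBbar A) lam"
  then obtain x :: "real^'n" where h: "tensor4_apply3 (tensorBbar A) x = lam *\<^sub>R x" "x \<bullet> x = 1"
    unfolding Z_eigenvalue_def by blast
  have "lam = x \<bullet> tensor4_apply3 (tensorBbar A) x" using h by simp
  then show "lam \<ge> 0" using form_apply form_nonneg by metis
qed

end
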